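(* Let $n\ge3$. There exists a quasi-metric $\rho$ on $[n]$ such that the Kantorovich-Rubinstein polytope $$KR(\rho)=\mathrm{Conv}\Big\{\frac{e_i-e_j}{\rho(i,j)}:1\le i\neq j\le n\Big\}$$ is affinely isomorphic to the polar dual $W_n^\circ$ of the cyclohedron $W_n$. Moreover $\rho$ satisfies the strict triangle inequality $\rho(i,k)<\rho(i,j)+\rho(j,k)$ whenever $i,j,k$ are pairwise distinct.
   Context: A quasi-metric on a finite set $X$ is $\rho:X\times X\to\mathbb{R}_{\ge0}$ with $\rho(x,y)=0\iff x=y$ and $\rho(x,z)\le\rho(x,y)+\rho(y,z)$; symmetry is not required. Realization of the cyclohedron: let $\mathrm{Con}(C_n)$ be the family consisting of $[n]$ and all nonempty proper cyclic intervals $\{i,i+1,\dots,j\}$ of $[n]$ (indices mod $n$), $\Delta_X=\mathrm{Conv}\{e_i:i\in X\}$, and $W_n=\sum_{X\in\mathrm{Con}(C_n)}\Delta_X\subset\{x:\sum x_i=N\}$, $N=|\mathrm{Con}(C_n)|=n^2-n+1$. Translate $W_n$ by $-\frac Nn(1,\dots,1)$ into $H_0=\{x:\sum x_i=0\}$ (the origin then lies in its relative interior) and let $W_n^\circ=\{y\in H_0:\langle y,x\rangle\le 1 \text{ for all } x \text{ in the translate}\}$ be its polar inside $H_0$. *)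

theory Defs
  imports "HOL-Analysis.Analysis" "HOL-Library.Function_Algebras"
begin

(* Vectors of R^n are represented as functions nat => real; coordinates are
   indexed by {0..<n} (i.e. [n] relabelled by i |-> i-1). *)

instantiation "fun" :: (type, real_vector) real_vector
begin
definition scaleR_fun :: "real \<Rightarrow> ('a \<Rightarrow> 'b) \<Rightarrow> 'a \<Rightarrow> 'b"
  where "scaleR_fun r f = (\<lambda>x. r *\<^sub>R f x)"
instance
  by standard (simp_all add: scaleR_fun_def fun_eq_iff scaleR_add_right scaleR_add_left)
end

definition unitv :: "nat \<Rightarrow> nat \<Rightarrow> real" where
  "unitv i = (\<lambda>j. if j = i then 1 else 0)"

definition quasi_metric_on :: "nat \<Rightarrow> (nat \<Rightarrow> nat \<Rightarrow> real) \<Rightarrow> bool" where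
  "quasi_metric_on n \<rho> \<longleftrightarrow>
     (\<forall>x<n. \<forall>y<n. \<rho> x y \<ge> 0 \<and> (\<rho> x y = 0 \<longleftrightarrow> x = y)) \<and>
     (\<forall>x<n. \<forall>y<n. \<forall>z<n. \<rho> x z \<le> \<rho> x y + \<rho> y z)"

definition KR :: "nat \<Rightarrow> (nat \<Rightarrow> nat \<Rightarrow> real) \<Rightarrow> (nat \<Rightarrow> real) set" where
  "KR n \<rho> = convex hull {(1 / \<rho> i j) *\<^sub>R (unitv i - unitv j) | i j. i < n \<and> j < n \<and> i \<noteq> j}"

definition cyc_interval :: "nat \<Rightarrow> nat \<Rightarrow> nat \<Rightarrow> nat set" where
  "cyc_interval n i l = {(i + k) mod n | k. k \<le> l}"

definition Con_cycle :: "nat \<Rightarrow> nat set set" where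
  "Con_cycle n = insert {..<n} {cyc_interval n i l | i l. i < n \<and> l + 1 < n}"

definition simplex_face :: "nat set \<Rightarrow> (nat \<Rightarrow> real) set" where
  "simplex_face X = convex hull (unitv ` X)"

text \<open>The cyclohedron W_n as Minkowski sum of the simplices Delta_X, X in Con(C_n).\<close>
definition cyclohedron :: "nat \<Rightarrow> (nat \<Rightarrow> real) set" where
  "cyclohedron n = {x. \<exists>p. (\<forall>X\<in>Con_cycle n. p X \<in> simplex_face X) \<and> x = (\<Sum>X\<in>Con_cycle n. p X)}"

definition cyclohedron_centered :: "nat \<Rightarrow> (nat \<Rightarrow> real) set" where
  "cyclohedron_centered n =
     (\<lambda>x. x - (real (card (Con_cycle n)) / real n) *\<^sub>R (\<lambda>j. if j < n then 1 else 0)) ` cyclohedron n"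

definition H0 :: "nat \<Rightarrow> (nat \<Rightarrow> real) set" where
  "H0 n = {y. (\<forall>j\<ge>n. y j = 0) \<and> (\<Sum>j<n. y j) = 0}"

definition cyclohedron_polar :: "nat \<Rightarrow> (nat \<Rightarrow> real) set" where
  "cyclohedron_polar n =
     {y \<in> H0 n. \<forall>x\<in>cyclohedron_centered n. (\<Sum>j<n. y j * x j) \<le> 1}"

definition affinely_isomorphic :: "('a::real_vector) set \<Rightarrow> ('b::real_vector) set \<Rightarrow> bool" where
  "affinely_isomorphic P Q \<longleftrightarrow>
     (\<exists>L b. linear L \<and> inj_on (\<lambda>x. L x + b) (affine hull P) \<and> (\<lambda>x. L x + b) ` P = Q)"

end

theory Submission imports Defs begin

lemma fsum_apply: "(\<Sum>X\<in>C. p X) j = (\<Sum>X\<in>C. (p X j::real))"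
  by (induction C rule: infinite_finite_induct) auto
lemma scaleR_fun_apply [simp]: "((c::real) *\<^sub>R (f::'a\<Rightarrow>real)) x = c * f x"
  by (simp add: scaleR_fun_def)

lemma Max_add_le:
  fixes a b :: "nat \<Rightarrow> real"
  assumes "finite X" "X \<noteq> {}"
  shows "Max ((a + b) ` X) \<le> Max (a ` X) + Max (b ` X)"
proof -
  have "a k + b k \<le> Max (a ` X) + Max (b ` X)" if "k \<in> X" for k
  proof -
    have "a k \<le> Max (a ` X)" "b k \<le> Max (b ` X)" using assms that by (intro Max_ge; simp)+
    then show ?thesis by (rule add_mono)
  qed
  then show ?thesis using assms by (auto simp: Max_le_iff)
qed

lemma Max_scale:
  fixes a :: "nat \<Rightarrow> real"
  assumes "finite X" "X \<noteq> {}" "(c::real) \<ge> 0"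
  shows "Max ((c *\<^sub>R a) ` X) = c * Max (a ` X)"
proof -
  have "Max (a ` X) \<in> a ` X" using assms by (intro Max_in) auto
  then obtain k0 where k0: "k0 \<in> X" "a k0 = Max (a ` X)" by auto
  show ?thesis
  proof (rule Max_eqI)
    show "finite ((c *\<^sub>R a) ` X)" using assms by simp
    show "y \<le> c * Max (a ` X)" if "y \<in> (c *\<^sub>R a) ` X" for y
    proof -
      from that obtain k where k: "k \<in> X" "y = c * a k" by auto
      have "a k \<le> Max (a ` X)" using assms k by (intro Max_ge) auto
      then show ?thesis using k assms(3) by (simp add: mult_left_mono)
    qed
    have "(c *\<^sub>R a) k0 = c * Max (a ` X)" using k0 by simp
    then show "c * Max (a ` X) \<in> (c *\<^sub>R a) ` X" using k0(1) by (metis image_eqI)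
  qed
qed

locale cyc = fixes n :: nat assumes n3: "3 \<le> n"
begin

lemma npos: "0 < n" using n3 by simp

lemma off_eq: "i < n \<Longrightarrow> k < n \<Longrightarrow> (k + n - i) mod n = (if i \<le> k then k - i else k + n - i)"
proof -
  assume a: "i < n" "k < n"
  show ?thesis
  proof (cases "i \<le> k")
    case True
    then have "k + n - i = (k - i) + n" by simp
    then have "(k + n - i) mod n = (k - i) mod n" by simp
    then show ?thesis using True a by simp
  next
    case False then show ?thesis using a by simp
  qed
qed

lemma add_mod_eq: "i < n \<Longrightarrow> t < n \<Longrightarrow> (i + t) mod n = (if i + t < n then i + t else i + t - n)"
  by (simp add: le_mod_geq)

definition prv :: "nat \<Rightarrow> nat" where "prv k = (k + n - 1) mod n"
definition suc :: "nat \<Rightarrow> nat" where "suc k = (k + 1) mod n"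

lemma prv_eq: "k < n \<Longrightarrow> prv k = (if k = 0 then n - 1 else k - 1)"
  using off_eq[of 1 k] n3 by (simp add: prv_def)

lemma suc_eq: "k < n \<Longrightarrow> suc k = (if k + 1 < n then k + 1 else 0)"
proof (cases "k + 1 < n")
  case False
  assume "k < n"
  with False have "k + 1 = n" by simp
  then show ?thesis by (simp add: suc_def)
qed (simp add: suc_def)

lemma prv_lt: "prv k < n" using npos by (simp add: prv_def)
lemma suc_lt: "suc k < n" using npos by (simp add: suc_def)
lemma suc_prv: "k < n \<Longrightarrow> suc (prv k) = k"
  using n3 by (simp add: prv_eq suc_eq)
lemma prv_suc: "k < n \<Longrightarrow> prv (suc k) = k"
  using n3 by (simp add: prv_eq suc_eq suc_lt; arith)

definition arc :: "nat \<Rightarrow> nat \<Rightarrow> nat set" where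
  "arc i m = {k. k < n \<and> (k + n - i) mod n < m}"

lemma arc_sub: "arc i m \<subseteq> {..<n}" by (auto simp: arc_def)

lemma mem_arc: "i < n \<Longrightarrow> k \<in> arc i m \<longleftrightarrow> k < n \<and> (if i \<le> k then k - i else k + n - i) < m"
  by (auto simp: arc_def off_eq)

lemma im_lt: "(i + m) mod n < n" using npos by simp

lemma im_eq: "i < n \<Longrightarrow> m < n \<Longrightarrow> (i + m) mod n = (if i + m < n then i + m else i + m - n)"
  by (rule add_mod_eq)

lemma a1: "i < n \<Longrightarrow> 0 < m \<Longrightarrow> i \<in> arc i m" by (simp add: mem_arc)
lemma a2: "i < n \<Longrightarrow> m < n \<Longrightarrow> prv i \<notin> arc i m"
  using n3 by (auto simp: mem_arc prv_eq prv_lt split: if_splits; arith)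
lemma a3: "i < n \<Longrightarrow> m < n \<Longrightarrow> (i + m) mod n \<notin> arc i m"
  using n3 by (auto simp: mem_arc im_eq split: if_splits; arith)
lemma a4: "i < n \<Longrightarrow> 0 < m \<Longrightarrow> m < n \<Longrightarrow> prv ((i + m) mod n) \<in> arc i m"
  using n3 by (auto simp: mem_arc im_eq prv_eq prv_lt split: if_splits; arith)
lemma a5: "i < n \<Longrightarrow> m < n \<Longrightarrow> k \<in> arc i m \<Longrightarrow> suc k \<notin> arc i m \<Longrightarrow> suc k = (i + m) mod n"
  using n3 by (auto simp: mem_arc im_eq suc_eq suc_lt split: if_splits; arith)
lemma a6: "i < n \<Longrightarrow> m < n \<Longrightarrow> k \<in> arc i m \<Longrightarrow> prv k \<notin> arc i m \<Longrightarrow> k = i"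
  using n3 by (auto simp: mem_arc prv_eq prv_lt split: if_splits; arith)
lemma a7: "i < n \<Longrightarrow> m < n \<Longrightarrow> insert ((i + m) mod n) (arc i m) = arc i (m + 1)"
  using n3 by (auto simp: mem_arc im_eq split: if_splits; arith)
lemma a8: "i < n \<Longrightarrow> m < n \<Longrightarrow> insert (prv i) (arc i m) = arc (prv i) (m + 1)"
  using n3 by (auto simp: mem_arc prv_eq prv_lt split: if_splits; arith)
lemma a9: "i < n \<Longrightarrow> arc i n = {..<n}"
  by (auto simp: mem_arc)
lemma a10: "k < n \<Longrightarrow> arc k 1 = {k}"
  by (auto simp: mem_arc split: if_splits; arith)

lemma cyc_arc: "i < n \<Longrightarrow> l < n \<Longrightarrow> cyc_interval n i l = arc i (l + 1)"
proof (intro set_eqI iffI)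
  fix x assume a: "i < n" "l < n" "x \<in> cyc_interval n i l"
  then obtain t where t: "t \<le> l" "x = (i + t) mod n" by (auto simp: cyc_interval_def)
  then show "x \<in> arc i (l+1)" using a by (auto simp: mem_arc add_mod_eq)
next
  fix x assume a: "i < n" "l < n" "x \<in> arc i (l + 1)"
  define t where "t = (if i \<le> x then x - i else x + n - i)"
  have "x < n" using a by (simp add: mem_arc)
  have "t \<le> l" using a by (auto simp: mem_arc t_def split: if_splits; arith)
  moreover have "x = (i + t) mod n" using a \<open>x < n\<close> by (auto simp: t_def add_mod_eq)
  ultimately show "x \<in> cyc_interval n i l" by (auto simp: cyc_interval_def)
qed


abbreviation Con where "Con \<equiv> Con_cycle n"

lemma Con_sub: "Con \<subseteq> Pow {..<n}"
proof
  fix X assume "X \<in> Con"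
  then consider "X = {..<n}" | i l where "X = cyc_interval n i l"
    unfolding Con_cycle_def by blast
  then show "X \<in> Pow {..<n}"
  proof cases
    case (2 i l)
    have "(i + k) mod n < n" for k using npos by simp
    then show ?thesis using 2 by (auto simp: cyc_interval_def)
  qed simp
qed

lemma Con_fin: "finite Con"
  using Con_sub by (rule finite_subset) simp

lemma whole_in: "{..<n} \<in> Con" by (simp add: Con_cycle_def)

lemma arc_in: "i < n \<Longrightarrow> 0 < m \<Longrightarrow> m < n \<Longrightarrow> arc i m \<in> Con"
proof -
  assume a: "i < n" "0 < m" "m < n"
  then have e: "arc i m = cyc_interval n i (m - 1)" using cyc_arc[of i "m - 1"] by simp
  have "m - 1 + 1 < n" using a by simp
  then have "cyc_interval n i (m-1) \<in> {cyc_interval n i l |i l. i < n \<and> l + 1 < n}"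
    using a by blast
  then show ?thesis unfolding e Con_cycle_def by blast
qed

lemma Con_cases: "X \<in> Con \<Longrightarrow> X = {..<n} \<or> (\<exists>i m. i < n \<and> 0 < m \<and> m < n \<and> X = arc i m)"
proof -
  assume X: "X \<in> Con"
  show ?thesis
  proof (cases "X = {..<n}")
    case False
    with X obtain i l where il: "i < n" "l + 1 < n" "X = cyc_interval n i l"
      unfolding Con_cycle_def by auto
    have "X = arc i (l+1)" using il cyc_arc[of i l] by simp
    moreover have "0 < l + 1" "l + 1 < n" using il by simp_all
    ultimately have "i < n \<and> 0 < l + 1 \<and> l + 1 < n \<and> X = arc i (l + 1)" using il(1) by simp
    then have "\<exists>i m. i < n \<and> 0 < m \<and> m < n \<and> X = arc i m" by (intro exI)
    then show ?thesis by (rule disjI2)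
  qed simp
qed

lemma Con_ne: "X \<in> Con \<Longrightarrow> X \<noteq> {}"
proof -
  assume X: "X \<in> Con"
  from Con_cases[OF X] show ?thesis
  proof
    assume "X = {..<n}" then show ?thesis using npos by auto
  next
    assume "\<exists>i m. i < n \<and> 0 < m \<and> m < n \<and> X = arc i m"
    then obtain i m where "i < n" "0 < m" "X = arc i m" by auto
    then show ?thesis using a1[of i m] by auto
  qed
qed

lemma Con_subn: "X \<in> Con \<Longrightarrow> X \<subseteq> {..<n}"
  using Con_sub by blast

lemma Con_fin_elem: "X \<in> Con \<Longrightarrow> finite X"
  by (rule finite_subset[OF Con_subn]) simp_all


lemma arc2: "p < n \<Longrightarrow> arc p 2 = {p, suc p}"
  using a7[of p 1] a10[of p] n3 by (simp add: suc_def insert_commute numeral_2_eq_2)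

definition Phi :: "(nat \<Rightarrow> real) \<Rightarrow> real" where
  "Phi y = (\<Sum>X\<in>Con. Max (y ` X))"

lemma Phi_add: "Phi (a + b) \<le> Phi a + Phi b"
proof -
  have "Max ((a + b) ` X) \<le> Max (a ` X) + Max (b ` X)" if "X \<in> Con" for X
    using Max_add_le[OF Con_fin_elem[OF that] Con_ne[OF that]] .
  then have "Phi (a + b) \<le> (\<Sum>X\<in>Con. Max (a ` X) + Max (b ` X))"
    unfolding Phi_def by (rule sum_mono)
  then show ?thesis by (simp add: Phi_def sum.distrib)
qed

lemma Phi_scale: "c \<ge> 0 \<Longrightarrow> Phi (c *\<^sub>R a) = c * Phi a"
proof -
  assume c: "c \<ge> 0"
  have "Max ((c *\<^sub>R a) ` X) = c * Max (a ` X)" if "X \<in> Con" for X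
    using Max_scale[OF Con_fin_elem[OF that] Con_ne[OF that] c] .
  then show ?thesis unfolding Phi_def sum_distrib_left by (rule sum.cong[OF refl])
qed

lemma Phi_zero: "Phi 0 = 0"
  using Phi_scale[of 0 0] by simp


lemma lin_comb_apply: "(u *\<^sub>R x + v *\<^sub>R z) j = u * x j + v * (z::nat\<Rightarrow>real) j"
  by simp

lemma face_le:
  assumes "X \<subseteq> {..<n}" "finite X" "X \<noteq> {}" "p \<in> simplex_face X"
  shows "(\<Sum>j<n. y j * p j) \<le> Max (y ` X)"
proof -
  define M where "M = Max (y ` X)"
  let ?S = "{q::nat\<Rightarrow>real. (\<Sum>j<n. y j * q j) \<le> M}"
  have "convex ?S"
    unfolding convex_def
  proof (intro ballI allI impI)
    fix x z :: "nat \<Rightarrow> real" and u v :: real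
    assume x: "x \<in> ?S" and z: "z \<in> ?S" and uv: "0 \<le> u" "0 \<le> v" "u + v = 1"
    have "(\<Sum>j<n. y j * (u *\<^sub>R x + v *\<^sub>R z) j) = u * (\<Sum>j<n. y j * x j) + v * (\<Sum>j<n. y j * z j)"
      by (simp add: sum.distrib sum_distrib_left algebra_simps)
    also have "\<dots> \<le> u * M + v * M"
      using x z uv by (intro add_mono mult_left_mono) auto
    also have "\<dots> = (u + v) * M" by (simp add: distrib_right)
    also have "\<dots> = M" using uv by simp
    finally show "u *\<^sub>R x + v *\<^sub>R z \<in> ?S" by simp
  qed
  moreover have "unitv ` X \<subseteq> ?S"
  proof
    fix q assume "q \<in> unitv ` X"
    then obtain k where k: "k \<in> X" "q = unitv k" by auto
    then have kn: "k < n" using assms(1) by auto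
    have "(\<Sum>j<n. y j * q j) = (\<Sum>j<n. if j = k then y k else 0)"
      using k by (intro sum.cong) (auto simp: unitv_def)
    also have "\<dots> = y k" using kn by simp
    also have "\<dots> \<le> M" unfolding M_def using k assms(2) by (intro Max_ge) auto
    finally show "q \<in> ?S" by simp
  qed
  ultimately have "simplex_face X \<subseteq> ?S"
    unfolding simplex_face_def by (intro hull_minimal)
  then show ?thesis using assms(4) M_def by auto
qed

definition one :: "nat \<Rightarrow> real" where "one = (\<lambda>j. if j < n then 1 else 0)"

lemma val_shift:
  assumes "y \<in> H0 n"
  shows "(\<Sum>j<n. y j * (w - c *\<^sub>R one) j) = (\<Sum>j<n. y j * w j)"
proof -
  have "(\<Sum>j<n. y j * (w - c *\<^sub>R one) j) = (\<Sum>j<n. y j * w j - c * y j)"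
    by (intro sum.cong) (auto simp: one_def algebra_simps)
  also have "\<dots> = (\<Sum>j<n. y j * w j) - c * (\<Sum>j<n. y j)"
    by (simp add: sum_subtractf sum_distrib_left)
  finally show ?thesis using assms by (simp add: H0_def)
qed

lemma polar_char: "cyclohedron_polar n = {y \<in> H0 n. Phi y \<le> 1}"
proof (intro set_eqI iffI)
  fix y assume y: "y \<in> cyclohedron_polar n"
  then have yH: "y \<in> H0 n" by (simp add: cyclohedron_polar_def)
  define am where "am X = (SOME k. k \<in> X \<and> y k = Max (y ` X))" for X
  have am: "am X \<in> X \<and> y (am X) = Max (y ` X)" if "X \<in> Con" for X
  proof -
    have "Max (y ` X) \<in> y ` X" using Con_fin_elem[OF that] Con_ne[OF that] by (intro Max_in) auto
    then obtain k where "k \<in> X \<and> y k = Max (y ` X)" by auto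
    then show ?thesis unfolding am_def by (rule someI)
  qed
  define w where "w = (\<Sum>X\<in>Con. unitv (am X))"
  have wW: "w \<in> cyclohedron n"
    unfolding cyclohedron_def w_def
  proof (intro CollectI exI conjI ballI)
    fix X assume "X \<in> Con"
    then show "unitv (am X) \<in> simplex_face X"
      unfolding simplex_face_def using am by (intro hull_inc) auto
  qed simp
  define c where "c = real (card (Con_cycle n)) / real n"
  have "w - c *\<^sub>R one \<in> cyclohedron_centered n"
    using wW unfolding cyclohedron_centered_def c_def one_def by auto
  then have le1: "(\<Sum>j<n. y j * (w - c *\<^sub>R one) j) \<le> 1"
    using y by (auto simp: cyclohedron_polar_def)
  have "(\<Sum>j<n. y j * w j) = (\<Sum>j<n. \<Sum>X\<in>Con. y j * unitv (am X) j)"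
    unfolding w_def fsum_apply by (simp add: sum_distrib_left)
  also have "\<dots> = (\<Sum>X\<in>Con. \<Sum>j<n. y j * unitv (am X) j)" by (rule sum.swap)
  also have "\<dots> = (\<Sum>X\<in>Con. Max (y ` X))"
  proof (intro sum.cong refl)
    fix X assume X: "X \<in> Con"
    then have kn: "am X < n" using am Con_subn by blast
    have "(\<Sum>j<n. y j * unitv (am X) j) = (\<Sum>j<n. if j = am X then y (am X) else 0)"
      by (intro sum.cong) (auto simp: unitv_def)
    also have "\<dots> = y (am X)" using kn by simp
    finally show "(\<Sum>j<n. y j * unitv (am X) j) = Max (y ` X)" using am[OF X] by simp
  qed
  finally have "Phi y \<le> 1" using le1 val_shift[OF yH] by (simp add: Phi_def)
  then show "y \<in> {y \<in> H0 n. Phi y \<le> 1}" using yH by simp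
next
  fix y assume "y \<in> {y \<in> H0 n. Phi y \<le> 1}"
  then have yH: "y \<in> H0 n" and P: "Phi y \<le> 1" by auto
  have "(\<Sum>j<n. y j * x j) \<le> 1" if x: "x \<in> cyclohedron_centered n" for x
  proof -
    obtain w p where wp: "x = w - (real (card Con) / real n) *\<^sub>R one"
      "\<forall>X\<in>Con. p X \<in> simplex_face X" "w = (\<Sum>X\<in>Con. p X)"
      using x unfolding cyclohedron_centered_def cyclohedron_def one_def by auto
    have "(\<Sum>j<n. y j * x j) = (\<Sum>j<n. y j * w j)" unfolding wp(1) by (rule val_shift[OF yH])
    also have "\<dots> = (\<Sum>j<n. \<Sum>X\<in>Con. y j * p X j)"
      unfolding wp(3) fsum_apply by (simp add: sum_distrib_left)
    also have "\<dots> = (\<Sum>X\<in>Con. \<Sum>j<n. y j * p X j)" by (rule sum.swap)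
    also have "\<dots> \<le> (\<Sum>X\<in>Con. Max (y ` X))"
    proof (rule sum_mono)
      fix X assume X: "X \<in> Con"
      show "(\<Sum>j<n. y j * p X j) \<le> Max (y ` X)"
        using face_le[OF Con_subn[OF X] Con_fin_elem[OF X] Con_ne[OF X]] wp(2) X by blast
    qed
    also have "\<dots> \<le> 1" using P by (simp add: Phi_def)
    finally show ?thesis .
  qed
  then show "y \<in> cyclohedron_polar n" using yH by (simp add: cyclohedron_polar_def)
qed


definition Lm :: "(nat \<Rightarrow> real) \<Rightarrow> nat \<Rightarrow> real" where
  "Lm z = (\<lambda>k. if k < n then (\<Sum>k'<n. \<Sum>l\<le>k'. z l) / real n - (\<Sum>l\<le>k. z l) else 0)"

lemma Lm_linear: "linear Lm"
proof (rule linearI)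
  fix x y :: "nat \<Rightarrow> real"
  show "Lm (x + y) = Lm x + Lm y"
    by (rule ext) (simp add: Lm_def sum.distrib add_divide_distrib)
next
  fix r and x :: "nat \<Rightarrow> real"
  show "Lm (r *\<^sub>R x) = r *\<^sub>R Lm x"
    by (rule ext) (simp add: Lm_def sum_distrib_left[symmetric] right_diff_distrib)
qed

lemma Lm_add: "Lm (x + y) = Lm x + Lm y"
  using Lm_linear by (simp add: linear_add)
lemma Lm_diff_lin: "Lm (x - y) = Lm x - Lm y"
  using Lm_linear by (simp add: linear_diff)
lemma Lm_scale: "Lm (r *\<^sub>R x) = r *\<^sub>R Lm x"
  using Lm_linear by (simp add: linear_scale)

lemma Lm_H0: "Lm z \<in> H0 n"
proof -
  define C where "C = (\<Sum>k'<n. \<Sum>l\<le>k'. z l)"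
  have "(\<Sum>k<n. Lm z k) = (\<Sum>k<n. C / real n - (\<Sum>l\<le>k. z l))"
    by (intro sum.cong) (auto simp: Lm_def C_def)
  also have "\<dots> = real n * (C / real n) - C"
    by (simp add: sum_subtractf C_def)
  also have "\<dots> = 0" using npos by simp
  finally show ?thesis by (simp add: H0_def Lm_def)
qed

lemma H0_zero: "w \<in> H0 n \<Longrightarrow> k \<ge> n \<Longrightarrow> w k = 0" by (simp add: H0_def)
lemma H0_sum: "w \<in> H0 n \<Longrightarrow> (\<Sum>k<n. w k) = 0" by (simp add: H0_def)

lemma H0_minus: "a \<in> H0 n \<Longrightarrow> b \<in> H0 n \<Longrightarrow> a - b \<in> H0 n"
  by (simp add: H0_def sum_subtractf)

lemma Lm_diff:
  assumes z: "z \<in> H0 n" and k: "k < n"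
  shows "Lm z k - Lm z (prv k) = - z k"
proof (cases k)
  case 0
  have p: "prv k = n - 1" using 0 npos by (simp add: prv_eq)
  have "(\<Sum>l\<le>n - 1. z l) = (\<Sum>l<n. z l)"
  proof -
    have "{..n - 1} = {..<n}" using npos by auto
    then show ?thesis by simp
  qed
  then have "(\<Sum>l\<le>n - 1. z l) = 0" using H0_sum[OF z] by simp
  then show ?thesis using 0 p npos by (simp add: Lm_def)
next
  case (Suc k')
  have p: "prv k = k'" using Suc k by (simp add: prv_eq)
  show ?thesis using Suc k p by (simp add: Lm_def)
qed

lemma H0_const:
  assumes w: "w \<in> H0 n" and c: "\<And>k. k < n \<Longrightarrow> w k = w (prv k)"
  shows "w = 0"
proof -
  have e: "w k = w 0" if "k < n" for k
    using that
  proof (induction k)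
    case (Suc k)
    then have "w (Suc k) = w (prv (Suc k))" by (intro c)
    also have "prv (Suc k) = k" using Suc.prems by (simp add: prv_eq)
    finally show ?case using Suc by simp
  qed simp
  have "(\<Sum>k<n. w k) = (\<Sum>k<n. w 0)" by (intro sum.cong refl e) simp
  then have "real n * w 0 = 0" using H0_sum[OF w] by simp
  then have "w 0 = 0" using npos by simp
  show ?thesis
  proof
    fix k show "w k = 0 k"
    proof (cases "k < n")
      case True then show ?thesis using e[OF True] \<open>w 0 = 0\<close> by simp
    qed (use H0_zero[OF w] in simp)
  qed
qed

lemma H0_diff_eq:
  assumes "a \<in> H0 n" "b \<in> H0 n" "\<And>k. k < n \<Longrightarrow> a k - a (prv k) = b k - b (prv k)"
  shows "a = b"
proof -
  have d: "(a - b) k = (a - b) (prv k)" if k: "k < n" for k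
    using assms(3)[OF k] unfolding minus_apply by linarith
  have "a - b = 0"
    using H0_minus[OF assms(1,2)] d by (rule H0_const)
  then show ?thesis by simp
qed

lemma Lm_inj: "z1 \<in> H0 n \<Longrightarrow> z2 \<in> H0 n \<Longrightarrow> Lm z1 = Lm z2 \<Longrightarrow> z1 = z2"
proof
  fix k assume z: "z1 \<in> H0 n" "z2 \<in> H0 n" "Lm z1 = Lm z2"
  show "z1 k = z2 k"
  proof (cases "k < n")
    case True
    then show ?thesis using Lm_diff[OF z(1) True] Lm_diff[OF z(2) True] z(3) by simp
  qed (use H0_zero[OF z(1), of k] H0_zero[OF z(2), of k] in simp)
qed

lemma unitv_H0: "i < n \<Longrightarrow> j < n \<Longrightarrow> unitv i - unitv j \<in> H0 n"
  by (simp add: H0_def unitv_def sum.distrib sum_subtractf)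

definition ww :: "nat \<Rightarrow> nat \<Rightarrow> nat \<Rightarrow> real" where "ww i j = Lm (unitv i - unitv j)"

lemma ww_diff: "i < n \<Longrightarrow> j < n \<Longrightarrow> k < n \<Longrightarrow>
   ww i j k - ww i j (prv k) = (if k = j then 1 else 0) - (if k = i then 1 else 0)"
  unfolding ww_def using Lm_diff[OF unitv_H0] by (simp add: unitv_def)

definition uS :: "nat set \<Rightarrow> nat \<Rightarrow> real" where
  "uS S = (\<lambda>k. if k < n then real (card S) / real n - (if k \<in> S then 1 else 0) else 0)"

lemma card_ind: "S \<subseteq> {..<n} \<Longrightarrow> (\<Sum>k<n. if k \<in> S then 1 else 0) = real (card S)"
proof -
  assume S: "S \<subseteq> {..<n}"
  have "(\<Sum>k<n. if k \<in> S then 1 else (0::real)) = (\<Sum>k\<in>S. 1)"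
    using S by (intro sum.mono_neutral_cong_right) auto
  then show ?thesis by simp
qed

lemma uS_H0: "S \<subseteq> {..<n} \<Longrightarrow> uS S \<in> H0 n"
proof -
  assume S: "S \<subseteq> {..<n}"
  have "(\<Sum>k<n. uS S k) = (\<Sum>k<n. real (card S) / real n - (if k \<in> S then 1 else 0))"
    by (intro sum.cong) (auto simp: uS_def)
  also have "\<dots> = real (card S) - real (card S)"
    using npos card_ind[OF S] by (simp add: sum_subtractf)
  finally show ?thesis by (simp add: H0_def uS_def)
qed

lemma arc_u:
  assumes i: "i < n" and m: "0 < m" "m < n"
  shows "uS (arc i m) = ww i ((i + m) mod n)"
proof (rule H0_diff_eq)
  let ?A = "arc i m" and ?j = "(i + m) mod n"
  show "uS ?A \<in> H0 n" by (rule uS_H0[OF arc_sub])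
  show "ww i ?j \<in> H0 n" unfolding ww_def by (rule Lm_H0)
  fix k assume k: "k < n"
  have jn: "?j < n" by (rule im_lt)
  have iA: "i \<in> ?A" using a1 i m by simp
  have jA: "?j \<notin> ?A" using a3 i m by simp
  have pi: "prv i \<notin> ?A" using a2 i m by simp
  have pj: "prv ?j \<in> ?A" using a4 i m by simp
  have d: "uS ?A k - uS ?A (prv k) = (if prv k \<in> ?A then 1 else 0) - (if k \<in> ?A then 1 else 0)"
    using k prv_lt[of k] by (simp add: uS_def)
  have "(if prv k \<in> ?A then 1 else 0) - (if k \<in> ?A then 1 else (0::real))
      = (if k = ?j then 1 else 0) - (if k = i then 1 else 0)"
  proof (cases "k \<in> ?A"; cases "prv k \<in> ?A")
    assume a: "k \<in> ?A" "prv k \<in> ?A"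
    have "k \<noteq> ?j" using a(1) jA by metis
    moreover have "k \<noteq> i" using a(2) pi by metis
    ultimately show ?thesis using a by simp
  next
    assume "k \<in> ?A" "prv k \<notin> ?A"
    then have "k = i" using a6[OF i m(2)] by metis
    moreover have "i \<noteq> ?j" using iA jA by metis
    ultimately show ?thesis using \<open>k \<in> ?A\<close> \<open>prv k \<notin> ?A\<close> by simp
  next
    assume "k \<notin> ?A" "prv k \<in> ?A"
    then have "suc (prv k) = ?j" using a5[of i m "prv k"] i m suc_prv[OF k] by simp
    then have "k = ?j" using suc_prv[OF k] by simp
    moreover have "i \<noteq> ?j" using iA jA by metis
    ultimately show ?thesis using \<open>k \<notin> ?A\<close> \<open>prv k \<in> ?A\<close> by simp
  next
    assume a: "k \<notin> ?A" "prv k \<notin> ?A"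
    have "k \<noteq> ?j" using a(2) pj by metis
    moreover have "k \<noteq> i" using a(1) iA by metis
    ultimately show ?thesis using a by simp
  qed
  then show "uS ?A k - uS ?A (prv k) = ww i ?j k - ww i ?j (prv k)"
    using d ww_diff[OF i jn k] by simp
qed


definition rot :: "nat \<Rightarrow> nat \<Rightarrow> nat" where "rot s k = (k + s) mod n"

lemma rot_lt: "rot s k < n" using npos by (simp add: rot_def)

lemma rot_inj: "s < n \<Longrightarrow> inj_on (rot s) {..<n}"
proof (rule inj_onI)
  fix a b assume s: "s < n" and a: "a \<in> {..<n}" and b: "b \<in> {..<n}" and e: "rot s a = rot s b"
  have "a < n" "b < n" using a b by auto
  then show "a = b" using e s by (simp add: rot_def add_mod_eq split: if_splits; arith)
qed

lemma rot_img: "s < n \<Longrightarrow> rot s ` {..<n} = {..<n}"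
  by (rule endo_inj_surj) (auto simp: rot_lt rot_inj)

lemma cyc_img: "cyc_interval n i l = (\<lambda>t. (i + t) mod n) ` {..l}"
  by (auto simp: cyc_interval_def)

lemma rot_cyc: "rot s ` cyc_interval n i l = cyc_interval n ((i + s) mod n) l"
proof -
  have "rot s ` cyc_interval n i l = (\<lambda>t. rot s ((i + t) mod n)) ` {..l}"
    unfolding cyc_img image_image by simp
  also have "\<dots> = (\<lambda>t. ((i + s) mod n + t) mod n) ` {..l}"
  proof (rule image_cong[OF refl])
    fix t
    have "rot s ((i + t) mod n) = (i + t + s) mod n" by (simp add: rot_def mod_add_left_eq)
    also have "\<dots> = (i + s + t) mod n" by (simp add: ac_simps)
    also have "\<dots> = ((i + s) mod n + t) mod n" by (rule mod_add_left_eq[symmetric])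
    finally show "rot s ((i + t) mod n) = ((i + s) mod n + t) mod n" .
  qed
  finally show ?thesis by (simp add: cyc_img)
qed

lemma rot_Con: "s < n \<Longrightarrow> X \<in> Con \<Longrightarrow> rot s ` X \<in> Con"
proof -
  assume s: "s < n" and X: "X \<in> Con"
  show ?thesis
  proof (cases "X = {..<n}")
    case True then show ?thesis using rot_img[OF s] whole_in by simp
  next
    case False
    with X obtain i l where il: "i < n" "l + 1 < n" "X = cyc_interval n i l"
      unfolding Con_cycle_def by auto
    have "rot s ` X = cyc_interval n ((i + s) mod n) l" using il rot_cyc by simp
    moreover have "(i + s) mod n < n" using npos by simp
    ultimately have "rot s ` X \<in> {cyc_interval n i l |i l. i < n \<and> l + 1 < n}"
      apply -
      apply (rule CollectI)
      apply (rule exI[where x="(i + s) mod n"])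
      apply (rule exI[where x=l])
      using il(2) by simp
    then show ?thesis unfolding Con_cycle_def by (rule insertI2)
  qed
qed

abbreviation Con' where "Con' \<equiv> Con - {{..<n}}"

lemma rot_Con': "s < n \<Longrightarrow> X \<in> Con' \<Longrightarrow> rot s ` X \<in> Con'"
proof -
  assume s: "s < n" and X: "X \<in> Con'"
  have "rot s ` X \<noteq> rot s ` {..<n}"
    using X Con_subn inj_on_image_eq_iff[OF rot_inj[OF s], of X "{..<n}"] by auto
  then show ?thesis using rot_Con[OF s] X rot_img[OF s] by auto
qed

lemma rot_Con'_inj: "s < n \<Longrightarrow> inj_on ((`) (rot s)) Con'"
proof (rule inj_onI)
  fix X Y assume s: "s < n" and X: "X \<in> Con'" and Y: "Y \<in> Con'" and e: "rot s ` X = rot s ` Y"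
  show "X = Y" using inj_on_image_eq_iff[OF rot_inj[OF s], of X Y] Con_subn X Y e by auto
qed

lemma rot_Con'_img: "s < n \<Longrightarrow> (`) (rot s) ` Con' = Con'"
  by (rule endo_inj_surj) (use Con_fin rot_Con' rot_Con'_inj in auto)

definition Psi :: "(nat \<Rightarrow> real) \<Rightarrow> real" where
  "Psi w = (\<Sum>X\<in>Con'. Max (w ` X))"

lemma Psi_rot: "s < n \<Longrightarrow> (\<Sum>X\<in>Con'. Max (w ` (rot s ` X))) = Psi w"
proof -
  assume s: "s < n"
  have "Psi w = (\<Sum>X\<in>(`) (rot s) ` Con'. Max (w ` X))"
    unfolding Psi_def rot_Con'_img[OF s] ..
  also have "\<dots> = (\<Sum>X\<in>Con'. Max (w ` (rot s ` X)))"
    by (subst sum.reindex[OF rot_Con'_inj[OF s]]) simp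
  finally show ?thesis by simp
qed

lemma sum_rot: "x < n \<Longrightarrow> (\<Sum>s<n. w (rot s x)) = (\<Sum>k<n. w k)"
proof -
  assume x: "x < n"
  have e: "rot s x = rot x s" for s by (simp add: rot_def add.commute)
  have "(\<Sum>k<n. w k) = (\<Sum>k\<in>rot x ` {..<n}. w k)" using rot_img[OF x] by simp
  also have "\<dots> = (\<Sum>s<n. w (rot x s))" by (subst sum.reindex[OF rot_inj[OF x]]) simp
  finally show ?thesis using e by simp
qed

lemma Psi_nonneg:
  assumes w: "w \<in> H0 n"
  shows "Psi w \<ge> 0"
proof -
  define x0 where "x0 X = (SOME x. x \<in> X)" for X :: "nat set"
  have x0: "x0 X \<in> X" if "X \<in> Con'" for X
  proof -
    have "X \<noteq> {}" using that Con_ne by simp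
    then obtain x where "x \<in> X" by auto
    then show ?thesis unfolding x0_def by (rule someI)
  qed
  have A: "real n * Psi w = (\<Sum>X\<in>Con'. \<Sum>s<n. Max (w ` (rot s ` X)))"
  proof -
    have "real n * Psi w = (\<Sum>s<n. Psi w)" by simp
    also have "\<dots> = (\<Sum>s<n. \<Sum>X\<in>Con'. Max (w ` (rot s ` X)))"
    proof (rule sum.cong[OF refl])
      fix s assume "s \<in> {..<n}"
      then have "s < n" by simp
      then show "Psi w = (\<Sum>X\<in>Con'. Max (w ` (rot s ` X)))" using Psi_rot by metis
    qed
    also have "\<dots> = (\<Sum>X\<in>Con'. \<Sum>s<n. Max (w ` (rot s ` X)))" by (rule sum.swap)
    finally show ?thesis .
  qed
  have B: "(\<Sum>X\<in>Con'. \<Sum>s<n. w (rot s (x0 X))) \<le> (\<Sum>X\<in>Con'. \<Sum>s<n. Max (w ` (rot s ` X)))"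
  proof (rule sum_mono, rule sum_mono)
    fix X s assume X: "X \<in> Con'"
    have "finite X" using X Con_fin_elem by auto
    then show "w (rot s (x0 X)) \<le> Max (w ` (rot s ` X))"
      using x0[OF X] by (intro Max_ge) auto
  qed
  have C: "(\<Sum>X\<in>Con'. \<Sum>s<n. w (rot s (x0 X))) = 0"
  proof -
    have "(\<Sum>X\<in>Con'. \<Sum>s<n. w (rot s (x0 X))) = (\<Sum>X\<in>Con'. \<Sum>k<n. w k)"
    proof (rule sum.cong[OF refl])
      fix X assume X: "X \<in> Con'"
      have "x0 X < n" using x0[OF X] X Con_subn by auto
      then show "(\<Sum>s<n. w (rot s (x0 X))) = (\<Sum>k<n. w k)" by (rule sum_rot)
    qed
    then show ?thesis using H0_sum[OF w] by simp
  qed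
  have "real n * Psi w \<ge> 0" using A B C by linarith
  then show ?thesis using npos by (simp add: zero_le_mult_iff)
qed

lemma Phi_split: "Phi w = Max (w ` {..<n}) + Psi w"
  unfolding Phi_def Psi_def by (rule sum.remove[OF Con_fin whole_in])

lemma Phi_pos:
  assumes w: "w \<in> H0 n" and k: "k < n" "w k > 0"
  shows "Phi w > 0"
proof -
  have "w k \<le> Max (w ` {..<n})" using k by (intro Max_ge) auto
  then show ?thesis using Phi_split[of w] Psi_nonneg[OF w] k by linarith
qed

lemma ww_H0: "ww i j \<in> H0 n" unfolding ww_def by (rule Lm_H0)

lemma ww_pos:
  assumes i: "i < n" and j: "j < n" and ij: "i \<noteq> j"
  shows "Phi (ww i j) > 0"
proof -
  let ?w = "ww i j"
  have d: "?w j - ?w (prv j) = 1" using ww_diff[OF i j j] ij by simp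
  have "\<exists>k<n. ?w k > 0"
  proof (rule ccontr)
    assume "\<not> ?thesis"
    then have le: "\<forall>k\<in>{..<n}. ?w k \<le> 0" by auto
    have "(\<Sum>k<n. ?w k) = 0" by (rule H0_sum[OF ww_H0])
    have "(\<Sum>k<n. - ?w k) = 0" using \<open>(\<Sum>k<n. ?w k) = 0\<close> by (simp add: sum_negf)
    then have "\<forall>k\<in>{..<n}. - ?w k = 0" using sum_nonneg_eq_0_iff[of "{..<n}" "\<lambda>k. - ?w k"] le by simp
    then have "\<forall>k\<in>{..<n}. ?w k = 0" by simp
    then show False using d j prv_lt[of j] by auto
  qed
  then obtain k where "k < n" "?w k > 0" by auto
  then show ?thesis using Phi_pos[OF ww_H0] by metis
qed


definition rho :: "nat \<Rightarrow> nat \<Rightarrow> real" where "rho i j = Phi (ww i j)"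

definition Gen :: "(nat \<Rightarrow> real) set" where
  "Gen = {(1 / rho i j) *\<^sub>R (unitv i - unitv j) | i j. i < n \<and> j < n \<and> i \<noteq> j}"

definition K :: "(nat \<Rightarrow> real) set" where "K = convex hull (Lm ` Gen)"

lemma gen_in_K: "i < n \<Longrightarrow> j < n \<Longrightarrow> i \<noteq> j \<Longrightarrow> (1 / Phi (ww i j)) *\<^sub>R ww i j \<in> K"
proof -
  assume a: "i < n" "j < n" "i \<noteq> j"
  have "(1 / rho i j) *\<^sub>R (unitv i - unitv j) \<in> Gen" using a unfolding Gen_def by blast
  then have "Lm ((1 / rho i j) *\<^sub>R (unitv i - unitv j)) \<in> K"
    unfolding K_def by (intro hull_inc imageI)
  then show ?thesis by (simp add: Lm_scale rho_def ww_def)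
qed

lemma K_convex: "convex K" unfolding K_def by (rule convex_convex_hull)

lemma ww_neg: "ww j i = - ww i j"
proof -
  have e: "unitv j - unitv i = (-1) *\<^sub>R (unitv i - unitv (j::nat))" by (rule ext) simp
  have "ww j i = Lm ((-1) *\<^sub>R (unitv i - unitv j))" unfolding ww_def by (simp only: e)
  also have "\<dots> = (-1) *\<^sub>R ww i j" unfolding ww_def by (rule Lm_scale)
  finally show ?thesis by simp
qed

lemma zero_in_K: "0 \<in> K"
proof -
  have n01: "(0::nat) < n" "(1::nat) < n" "(0::nat) \<noteq> 1" using n3 by auto
  let ?w = "ww 0 1"
  define p where "p = Phi (ww 0 1)"
  define q where "q = Phi (ww 1 0)"
  have p: "p > 0" unfolding p_def using ww_pos n01 by simp
  have q: "q > 0" unfolding q_def using ww_pos n01 by simp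
  have x: "(1 / p) *\<^sub>R ?w \<in> K" unfolding p_def using gen_in_K n01 by simp
  have y: "(1 / q) *\<^sub>R (- ?w) \<in> K" unfolding q_def using gen_in_K[of 1 0] n01 ww_neg[of 0 1] by simp
  have mem: "(p / (p + q)) *\<^sub>R ((1 / p) *\<^sub>R ?w) + (q / (p + q)) *\<^sub>R ((1 / q) *\<^sub>R (- ?w)) \<in> K"
    using p q by (intro convexD[OF K_convex x y]) (auto simp: add_divide_distrib[symmetric])
  have zero: "(p / (p + q)) *\<^sub>R ((1 / p) *\<^sub>R ?w) + (q / (p + q)) *\<^sub>R ((1 / q) *\<^sub>R (- ?w)) = 0"
    using p q by (simp add: scaleR_scaleR)
  show ?thesis using mem by (simp only: zero)
qed

definition good :: "(nat \<Rightarrow> real) \<Rightarrow> bool" where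
  "good y \<longleftrightarrow> (\<exists>t k. 0 \<le> t \<and> t \<le> Phi y \<and> k \<in> K \<and> y = t *\<^sub>R k)"

lemma good_zero: "good 0"
  unfolding good_def using zero_in_K Phi_zero by (intro exI[of _ 0] exI[of _ 0]) simp

lemma good_gen: "i < n \<Longrightarrow> j < n \<Longrightarrow> i \<noteq> j \<Longrightarrow> good (ww i j)"
proof -
  assume a: "i < n" "j < n" "i \<noteq> j"
  have p: "Phi (ww i j) > 0" using ww_pos a by simp
  have "ww i j = Phi (ww i j) *\<^sub>R ((1 / Phi (ww i j)) *\<^sub>R ww i j)" using p by simp
  then show ?thesis unfolding good_def using p gen_in_K[OF a] by (intro exI[of _ "Phi (ww i j)"] exI) auto
qed

lemma good_scale: "good a \<Longrightarrow> c \<ge> 0 \<Longrightarrow> good (c *\<^sub>R a)"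
proof -
  assume g: "good a" and c: "c \<ge> 0"
  then obtain t k where tk: "0 \<le> t" "t \<le> Phi a" "k \<in> K" "a = t *\<^sub>R k" unfolding good_def by blast
  have "c * t \<le> c * Phi a" using tk c by (simp add: mult_left_mono)
  then have "0 \<le> c * t \<and> c * t \<le> Phi (c *\<^sub>R a) \<and> k \<in> K \<and> c *\<^sub>R a = (c * t) *\<^sub>R k"
    using tk c by (simp add: Phi_scale)
  then show ?thesis unfolding good_def by blast
qed

lemma good_add: "good a \<Longrightarrow> good b \<Longrightarrow> Phi a + Phi b \<le> Phi (a + b) \<Longrightarrow> good (a + b)"
proof -
  assume ga: "good a" and gb: "good b" and P: "Phi a + Phi b \<le> Phi (a + b)"
  obtain t k where tk: "0 \<le> t" "t \<le> Phi a" "k \<in> K" "a = t *\<^sub>R k" using ga unfolding good_def by blast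
  obtain s l where sl: "0 \<le> s" "s \<le> Phi b" "l \<in> K" "b = s *\<^sub>R l" using gb unfolding good_def by blast
  show ?thesis
  proof (cases "t + s = 0")
    case True
    then have "t = 0" "s = 0" using tk sl by auto
    then have "a + b = 0" using tk sl by simp
    then show ?thesis using good_zero by simp
  next
    case False
    then have ts: "t + s > 0" using tk sl by simp
    define m where "m = (t / (t + s)) *\<^sub>R k + (s / (t + s)) *\<^sub>R l"
    have "m \<in> K" unfolding m_def using ts tk sl
      by (intro convexD[OF K_convex]) (auto simp: add_divide_distrib[symmetric])
    moreover have "a + b = (t + s) *\<^sub>R m"
      unfolding m_def using ts tk sl by (simp add: scaleR_add_right scaleR_scaleR)
    moreover have "t + s \<le> Phi (a + b)" using tk sl P by linarith
    ultimately show ?thesis unfolding good_def using ts by (intro exI[of _ "t + s"] exI[of _ m]) auto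
  qed
qed

lemma good_K: "good y \<Longrightarrow> Phi y \<le> 1 \<Longrightarrow> y \<in> K"
proof -
  assume g: "good y" and P: "Phi y \<le> 1"
  then obtain t k where tk: "0 \<le> t" "t \<le> Phi y" "k \<in> K" "y = t *\<^sub>R k" unfolding good_def by blast
  have "t *\<^sub>R k + (1 - t) *\<^sub>R 0 \<in> K" using tk P by (intro convexD[OF K_convex _ zero_in_K]) auto
  then show ?thesis using tk by simp
qed


lemma ivt_nat: "P a \<Longrightarrow> \<not> P b \<Longrightarrow> a < b \<Longrightarrow> \<exists>t. a \<le> t \<and> t < b \<and> P t \<and> \<not> P (Suc t)"
proof (induction b)
  case 0 then show ?case by simp
next
  case (Suc b)
  show ?case
  proof (cases "P b")
    case True then show ?thesis using Suc.prems by (intro exI[of _ b]) auto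
  next
    case False
    then have "a < b" using Suc.prems by (cases "a = b") auto
    then obtain t where "a \<le> t \<and> t < b \<and> P t \<and> \<not> P (Suc t)" using Suc.IH[OF Suc.prems(1) False] by blast
    then show ?thesis by (intro exI[of _ t]) auto
  qed
qed

lemma suc_mod: "suc ((i + t) mod n) = (i + Suc t) mod n"
  by (simp add: suc_def mod_Suc_eq)

lemma max_arc:
  assumes L: "L \<subseteq> {..<n}" "L \<noteq> {}" "L \<noteq> {..<n}"
  shows "\<exists>i m. i < n \<and> 0 < m \<and> m < n \<and> arc i m \<subseteq> L \<and> prv i \<notin> L \<and> (i + m) mod n \<notin> L"
proof -
  define M where "M = {m. \<exists>i<n. 0 < m \<and> m < n \<and> arc i m \<subseteq> L}"
  obtain k where k: "k \<in> L" using L by auto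
  then have kn: "k < n" using L by auto
  have "1 \<in> M" unfolding M_def using a10[OF kn] k kn n3 by auto
  moreover have fin: "finite M" unfolding M_def by (rule finite_subset[of _ "{..<n}"]) auto
  ultimately have "Max M \<in> M" by (intro Max_in) auto
  then obtain i where i: "i < n" "0 < Max M" "Max M < n" "arc i (Max M) \<subseteq> L" unfolding M_def by auto
  define m where "m = Max M"
  have p: "prv i \<notin> L"
  proof
    assume pL: "prv i \<in> L"
    have "arc (prv i) (m + 1) = insert (prv i) (arc i m)" using a8[OF i(1), of m] i(3) m_def by simp
    then have sub: "arc (prv i) (m + 1) \<subseteq> L" using i(4) pL m_def by simp
    show False
    proof (cases "m + 1 < n")
      case True
      then have "m + 1 \<in> M" unfolding M_def using sub prv_lt by auto
      then show False using Max_ge[OF fin] m_def by fastforce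
    next
      case False
      then have "m + 1 = n" using i m_def by simp
      then have "{..<n} \<subseteq> L" using sub a9[OF prv_lt] by simp
      then show False using L by auto
    qed
  qed
  have q: "(i + m) mod n \<notin> L"
  proof
    assume pL: "(i + m) mod n \<in> L"
    have "arc i (m + 1) = insert ((i + m) mod n) (arc i m)" using a7[OF i(1), of m] i(3) m_def by simp
    then have sub: "arc i (m + 1) \<subseteq> L" using i(4) pL m_def by simp
    show False
    proof (cases "m + 1 < n")
      case True
      then have "m + 1 \<in> M" unfolding M_def using sub i by auto
      then show False using Max_ge[OF fin] m_def by fastforce
    next
      case False
      then have "m + 1 = n" using i m_def by simp
      then have "{..<n} \<subseteq> L" using sub a9[OF i(1)] by simp
      then show False using L by auto
    qed
  qed
  have "i < n \<and> 0 < m \<and> m < n \<and> arc i m \<subseteq> L \<and> prv i \<notin> L \<and> (i + m) mod n \<notin> L"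
    using i p q m_def by simp
  then show ?thesis by (intro exI)
qed

lemma connected_arc:
  assumes i: "i < n" and m: "0 < m" "m < n"
    and L: "L \<subseteq> {..<n}" "L \<noteq> {..<n}" "arc i m \<subseteq> L" "prv i \<notin> L" "(i + m) mod n \<notin> L"
    and X: "X \<in> Con" "X \<subseteq> L"
  shows "X \<subseteq> arc i m \<or> X \<subseteq> L - arc i m"
proof (rule ccontr)
  let ?A = "arc i m"
  assume nc: "\<not> (X \<subseteq> ?A \<or> X \<subseteq> L - ?A)"
  have "X \<noteq> {..<n}" using X L by auto
  with X obtain i' l where il: "i' < n" "l + 1 < n" "X = cyc_interval n i' l"
    unfolding Con_cycle_def by auto
  define P where "P t = ((i' + t) mod n \<in> ?A)" for t
  have inX: "(i' + t) mod n \<in> X" if "t \<le> l" for t using il that by (auto simp: cyc_interval_def)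
  from nc obtain x1 where x1: "x1 \<in> X" "x1 \<notin> ?A" by auto
  from nc obtain x2 where x2: "x2 \<in> X" "x2 \<notin> L - ?A" by auto
  obtain t1 where t1: "t1 \<le> l" "\<not> P t1" using x1 il unfolding P_def cyc_interval_def by auto
  obtain t2 where t2: "t2 \<le> l" "P t2" using x2 il X unfolding P_def cyc_interval_def by auto
  have "t1 \<noteq> t2" using t1 t2 by auto
  then consider "t2 < t1" | "t1 < t2" by linarith
  then show False
  proof cases
    case 1
    then obtain t where t: "t2 \<le> t" "t < t1" "P t" "\<not> P (Suc t)" using ivt_nat[of P t2 t1] t1 t2 by blast
    have "suc ((i' + t) mod n) \<notin> ?A" using t(4) unfolding P_def suc_mod .
    then have "suc ((i' + t) mod n) = (i + m) mod n" using a5[OF i m(2)] t(3) unfolding P_def by blast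
    moreover have "(i' + Suc t) mod n \<in> L" using inX[of "Suc t"] t t1 X by auto
    ultimately show False using L(5) suc_mod by simp
  next
    case 2
    then obtain t where t: "t1 \<le> t" "t < t2" "\<not> P t" "P (Suc t)" using ivt_nat[of "\<lambda>t. \<not> P t" t1 t2] t1 t2 by blast
    define k where "k = (i' + t) mod n"
    have kn: "k < n" unfolding k_def using npos by simp
    have sA: "suc k \<in> ?A" using t(4) unfolding P_def k_def suc_mod .
    have "prv (suc k) \<notin> ?A" using t(3) prv_suc[OF kn] unfolding P_def k_def by simp
    then have "suc k = i" using a6[OF i m(2) sA] by simp
    then have "k = prv i" using prv_suc[OF kn] by simp
    moreover have "k \<in> L" unfolding k_def using inX[of t] t t2 X by auto
    ultimately show False using L(4) by simp
  qed
qed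

lemma Max_uS:
  assumes "X \<subseteq> {..<n}" "finite X" "X \<noteq> {}"
  shows "Max (uS S ` X) = real (card S) / real n - (if X \<subseteq> S then 1 else 0)"
proof (rule Max_eqI)
  show "finite (uS S ` X)" using assms by simp
  show "y \<le> real (card S) / real n - (if X \<subseteq> S then 1 else 0)" if "y \<in> uS S ` X" for y
  proof -
    from that obtain k where k: "k \<in> X" "y = uS S k" by auto
    then have kn: "k < n" using assms by auto
    show ?thesis using k kn by (auto simp: uS_def)
  qed
  show "real (card S) / real n - (if X \<subseteq> S then 1 else 0) \<in> uS S ` X"
  proof (cases "X \<subseteq> S")
    case True
    obtain k where k: "k \<in> X" using assms by auto
    then have "uS S k = real (card S) / real n - (if X \<subseteq> S then 1 else 0)"
      using True assms by (auto simp: uS_def)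
    then show ?thesis using k by (metis image_eqI)
  next
    case False
    then obtain k where k: "k \<in> X" "k \<notin> S" by auto
    then have "uS S k = real (card S) / real n - (if X \<subseteq> S then 1 else 0)"
      using False assms by (auto simp: uS_def)
    then show ?thesis using k by (metis image_eqI)
  qed
qed


lemma uS_add:
  assumes "A \<inter> B = {}" "finite A" "finite B"
  shows "uS (A \<union> B) = uS A + uS B"
proof
  fix k
  have c: "card (A \<union> B) = card A + card B" using assms by (simp add: card_Un_disjoint)
  show "uS (A \<union> B) k = (uS A + uS B) k"
    using assms(1) by (auto simp: uS_def c add_divide_distrib)
qed

lemma good_uS: "L \<subseteq> {..<n} \<Longrightarrow> L \<noteq> {} \<Longrightarrow> L \<noteq> {..<n} \<Longrightarrow> good (uS L)"
proof (induction "card L" arbitrary: L rule: less_induct)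
  case less
  obtain i m where im: "i < n" "0 < m" "m < n" "arc i m \<subseteq> L" "prv i \<notin> L" "(i + m) mod n \<notin> L"
    using max_arc[OF less.prems] by blast
  let ?A = "arc i m"
  have iA: "i \<in> ?A" using a1 im by simp
  have jA: "(i + m) mod n \<notin> ?A" using a3 im by simp
  show ?case
  proof (cases "?A = L")
    case True
    have "i \<noteq> (i + m) mod n" using iA jA by metis
    then have "good (ww i ((i + m) mod n))" using good_gen im(1) im_lt by simp
    then show ?thesis using arc_u[OF im(1-3)] True by simp
  next
    case False
    define B where "B = L - ?A"
    have finL: "finite L" using less.prems(1) finite_subset by auto
    have LAB: "L = ?A \<union> B" "?A \<inter> B = {}" using im(4) B_def by auto
    have finA: "finite ?A" using finL im(4) finite_subset by auto
    have finB: "finite B" using finL B_def by simp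
    have Bne: "B \<noteq> {}" using False im(4) B_def by auto
    have "?A \<subset> L" using im(4) False by (rule psubsetI)
    then have cA: "card ?A < card L" by (rule psubset_card_mono[OF finL])
    have "B \<subseteq> L" unfolding B_def by (rule Diff_subset)
    moreover have "i \<in> L" "i \<notin> B" using iA im(4) B_def by auto
    ultimately have "B \<subset> L" by auto
    then have cB: "card B < card L" by (rule psubset_card_mono[OF finL])
    have An: "?A \<noteq> {..<n}" using \<open>?A \<subset> L\<close> less.prems(1) by auto
    have Ane: "?A \<noteq> {}" using iA by auto
    have gA: "good (uS ?A)" by (rule less.hyps[OF cA arc_sub Ane An])
    have Bs: "B \<subseteq> {..<n}" using less.prems(1) B_def by auto
    have Bn: "B \<noteq> {..<n}" using \<open>B \<subset> L\<close> less.prems(1) by auto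
    have gB: "good (uS B)" by (rule less.hyps[OF cB Bs Bne Bn])
    have sum: "uS L = uS ?A + uS B" using uS_add[OF LAB(2) finA finB] LAB(1) by simp
    have "Phi (uS ?A) + Phi (uS B) \<le> Phi (uS L)"
    proof -
      have "Max (uS ?A ` X) + Max (uS B ` X) \<le> Max (uS L ` X)" if X: "X \<in> Con" for X
      proof -
        have XX: "X \<subseteq> {..<n}" "finite X" "X \<noteq> {}" using Con_subn Con_fin_elem Con_ne X by auto
        have "(if X \<subseteq> L then 1 else 0) \<le> (if X \<subseteq> ?A then 1 else 0) + (if X \<subseteq> B then (1::real) else 0)"
        proof (cases "X \<subseteq> L")
          case True
          then have "X \<subseteq> ?A \<or> X \<subseteq> B"
            using connected_arc[OF im(1-3) less.prems(1,3) im(4-6) X] B_def by simp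
          then show ?thesis by auto
        qed simp
        moreover have "real (card L) = real (card ?A) + real (card B)"
          using LAB finA finB by (simp add: card_Un_disjoint)
        ultimately show ?thesis unfolding Max_uS[OF XX] by (simp add: add_divide_distrib)
      qed
      then have "(\<Sum>X\<in>Con. Max (uS ?A ` X) + Max (uS B ` X)) \<le> Phi (uS L)"
        unfolding Phi_def by (rule sum_mono)
      then show ?thesis by (simp add: Phi_def sum.distrib)
    qed
    then show ?thesis using good_add[OF gA gB] sum by simp
  qed
qed


lemma H0_scale: "a \<in> H0 n \<Longrightarrow> c *\<^sub>R a \<in> H0 n"
  by (simp add: H0_def sum_distrib_left[symmetric])

lemma good_H0: "y \<in> H0 n \<Longrightarrow> good y"
proof (induction "card (y ` {..<n})" arbitrary: y rule: less_induct)
  case less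
  have yH: "y \<in> H0 n" by (rule less.prems)
  show ?case
  proof (cases "\<forall>k<n. y k = y (prv k)")
    case True
    then have "y = 0" using H0_const[OF yH] by blast
    then show ?thesis using good_zero by simp
  next
    case False
    then obtain k0 where k0: "k0 < n" "y k0 \<noteq> y (prv k0)" by auto
    define Y where "Y = y ` {..<n}"
    have finY: "finite Y" unfolding Y_def by simp
    have Yne: "Y \<noteq> {}" unfolding Y_def using npos by auto
    define v where "v = Min Y"
    have vY: "v \<in> Y" unfolding v_def using finY Yne by (rule Min_in)
    have vle: "v \<le> y k" if "k < n" for k unfolding v_def Y_def using that by (intro Min_le) auto
    define L where "L = {k. k < n \<and> y k = v}"
    have Ls: "L \<subseteq> {..<n}" unfolding L_def by auto
    have Lne: "L \<noteq> {}" using vY unfolding L_def Y_def by auto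
    have Ln: "L \<noteq> {..<n}"
    proof
      assume "L = {..<n}"
      then have "y k0 = v" "y (prv k0) = v" using k0 prv_lt unfolding L_def by blast+
      then show False using k0 by simp
    qed
    define Y' where "Y' = y ` ({..<n} - L)"
    have finY': "finite Y'" unfolding Y'_def by simp
    have Y'ne: "Y' \<noteq> {}" unfolding Y'_def using Ls Ln by auto
    define v' where "v' = Min Y'"
    have v'Y: "v' \<in> Y'" unfolding v'_def using finY' Y'ne by (rule Min_in)
    have v'le: "v' \<le> y k" if "k < n" "k \<notin> L" for k unfolding v'_def Y'_def using that by (intro Min_le) auto
    have vv': "v < v'"
    proof -
      from v'Y obtain k where k: "k < n" "k \<notin> L" "v' = y k" unfolding Y'_def by auto
      then show ?thesis using vle[OF k(1)] unfolding L_def by auto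
    qed
    define d where "d = v' - v"
    have d: "d > 0" using vv' d_def by simp
    define c where "c = real (card L) / real n"
    define y' where "y' = y - d *\<^sub>R uS L"
    have y'H: "y' \<in> H0 n" unfolding y'_def using yH H0_scale[OF uS_H0[OF Ls]] by (rule H0_minus)
    define g where "g k = (if k \<in> L then v' else y k)" for k
    have y'g: "y' k = g k - d * c" if "k < n" for k
    proof -
      have e: "y' k = y k - d * (c - (if k \<in> L then 1 else 0))"
        using that unfolding y'_def uS_def c_def by simp
      show ?thesis
      proof (cases "k \<in> L")
        case True
        then have "y k = v" unfolding L_def by simp
        then show ?thesis using e True unfolding g_def d_def by (simp add: algebra_simps)
      next
        case False
        then show ?thesis using e unfolding g_def by simp
      qed
    qed
    have "y' ` {..<n} = (\<lambda>t. t - d * c) ` (g ` {..<n})"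
      using y'g by (auto simp: image_image intro!: image_cong)
    then have c1: "card (y' ` {..<n}) \<le> card (g ` {..<n})" by (simp add: card_image_le)
    have "g ` {..<n} \<subseteq> Y - {v}"
    proof
      fix t assume "t \<in> g ` {..<n}"
      then obtain k where k: "k < n" "t = g k" by auto
      show "t \<in> Y - {v}"
      proof (cases "k \<in> L")
        case True
        then show ?thesis using k v'Y vv' unfolding g_def Y'_def Y_def by auto
      next
        case False
        then show ?thesis using k unfolding g_def Y_def L_def by auto
      qed
    qed
    then have "card (g ` {..<n}) \<le> card (Y - {v})" using finY by (intro card_mono) auto
    also have "\<dots> < card Y" using finY vY by (rule card_Diff1_less)
    finally have cy': "card (y' ` {..<n}) < card (y ` {..<n})" using c1 Y_def by simp
    have g1: "good y'" by (rule less.hyps[OF cy' y'H])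
    have g2: "good (d *\<^sub>R uS L)" using good_scale[OF good_uS[OF Ls Lne Ln]] d by simp
    have ysum: "y = y' + d *\<^sub>R uS L" unfolding y'_def by simp
    have "Phi y' + Phi (d *\<^sub>R uS L) \<le> Phi y"
    proof -
      have "Max (y' ` X) + d * Max (uS L ` X) \<le> Max (y ` X)" if X: "X \<in> Con" for X
      proof -
        have XX: "X \<subseteq> {..<n}" "finite X" "X \<noteq> {}" using Con_subn Con_fin_elem Con_ne X by auto
        have MLu: "Max (uS L ` X) = c - (if X \<subseteq> L then 1 else 0)"
          unfolding Max_uS[OF XX] c_def ..
        have "Max (y' ` X) \<le> Max (y ` X) + d * (if X \<subseteq> L then 1 else 0) - d * c"
        proof (subst Max_le_iff)
          show "finite (y' ` X)" "y' ` X \<noteq> {}" using XX by auto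
          show "\<forall>a\<in>y' ` X. a \<le> Max (y ` X) + d * (if X \<subseteq> L then 1 else 0) - d * c"
          proof
            fix a assume "a \<in> y' ` X"
            then obtain k where k: "k \<in> X" "a = y' k" by auto
            have kn: "k < n" using k XX by auto
            have yk: "y k \<le> Max (y ` X)" using k XX by (intro Max_ge) auto
            have "g k \<le> Max (y ` X) + d * (if X \<subseteq> L then 1 else 0)"
            proof (cases "X \<subseteq> L")
              case True
              then have "k \<in> L" using k by auto
              then have "g k = v + d" "y k = v" unfolding g_def d_def L_def by auto
              then show ?thesis using True yk by simp
            next
              case False
              then obtain x0 where x0: "x0 \<in> X" "x0 \<notin> L" by auto
              have "v' \<le> y x0" using x0 XX by (intro v'le) auto
              also have "y x0 \<le> Max (y ` X)" using x0 XX by (intro Max_ge) auto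
              finally have "v' \<le> Max (y ` X)" .
              then show ?thesis using False yk unfolding g_def by auto
            qed
            then show "a \<le> Max (y ` X) + d * (if X \<subseteq> L then 1 else 0) - d * c"
              using k(2) y'g[OF kn] by simp
          qed
        qed
        then show ?thesis unfolding MLu by (simp add: algebra_simps)
      qed
      then have s: "(\<Sum>X\<in>Con. Max (y' ` X) + d * Max (uS L ` X)) \<le> Phi y"
        unfolding Phi_def by (rule sum_mono)
      have e1: "Phi (d *\<^sub>R uS L) = d * Phi (uS L)" using d by (simp add: Phi_scale)
      have e2: "Phi y' + d * Phi (uS L) = (\<Sum>X\<in>Con. Max (y' ` X) + d * Max (uS L ` X))"
        unfolding Phi_def by (simp add: sum.distrib sum_distrib_left)
      show ?thesis using s e1 e2 by linarith
    qed
    then show ?thesis using good_add[OF g1 g2] ysum by simp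
  qed
qed


lemma H0_add: "a \<in> H0 n \<Longrightarrow> b \<in> H0 n \<Longrightarrow> a + b \<in> H0 n"
  by (simp add: H0_def sum.distrib)

lemma affine_H0: "affine (H0 n)"
  unfolding affine_def by (intro ballI allI impI H0_add H0_scale)

lemma convex_W: "convex {y \<in> H0 n. Phi y \<le> 1}"
  unfolding convex_def
proof (intro ballI allI impI)
  fix x y :: "nat \<Rightarrow> real" and u v :: real
  assume x: "x \<in> {y \<in> H0 n. Phi y \<le> 1}" and y: "y \<in> {y \<in> H0 n. Phi y \<le> 1}"
    and uv: "0 \<le> u" "0 \<le> v" "u + v = 1"
  have "Phi (u *\<^sub>R x + v *\<^sub>R y) \<le> Phi (u *\<^sub>R x) + Phi (v *\<^sub>R y)" by (rule Phi_add)
  also have "\<dots> = u * Phi x + v * Phi y" using uv by (simp add: Phi_scale)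
  also have "\<dots> \<le> u * 1 + v * 1" using x y uv by (intro add_mono mult_left_mono) auto
  finally have "Phi (u *\<^sub>R x + v *\<^sub>R y) \<le> 1" using uv by simp
  moreover have "u *\<^sub>R x + v *\<^sub>R y \<in> H0 n" using x y by (intro H0_add H0_scale) auto
  ultimately show "u *\<^sub>R x + v *\<^sub>R y \<in> {y \<in> H0 n. Phi y \<le> 1}" by simp
qed

lemma ww_add: "ww i k = ww i j + ww j k"
proof -
  have "unitv i - unitv k = (unitv i - unitv j) + (unitv j - unitv (k::nat))" by simp
  then show ?thesis unfolding ww_def by (simp only: Lm_add)
qed

lemma ww_self: "ww i i = 0"
  unfolding ww_def using Lm_scale[of 0 0] by simp

lemma rho_strict:
  assumes i: "i < n" and j: "j < n" and k: "k < n" and d: "i \<noteq> j" "j \<noteq> k"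
  shows "rho i k < rho i j + rho j k"
proof -
  let ?a = "ww i j" and ?b = "ww j k"
  define p where "p = prv j"
  have pn: "p < n" unfolding p_def by (rule prv_lt)
  have X: "{p, j} \<in> Con" using arc_in[OF pn, of 2] arc2[OF pn] suc_prv[OF j] n3 unfolding p_def by simp
  have da: "?a j = ?a p + 1" using ww_diff[OF i j j] d unfolding p_def by simp
  have db: "?b j = ?b p - 1" using ww_diff[OF j k j] d unfolding p_def by simp
  have le: "\<forall>X\<in>Con. Max ((?a + ?b) ` X) \<le> Max (?a ` X) + Max (?b ` X)"
    using Max_add_le Con_fin_elem Con_ne by blast
  have lt: "Max ((?a + ?b) ` {p, j}) < Max (?a ` {p, j}) + Max (?b ` {p, j})"
    using da db by simp
  have "(\<Sum>X\<in>Con. Max ((?a + ?b) ` X)) < (\<Sum>X\<in>Con. Max (?a ` X) + Max (?b ` X))"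
  proof (rule sum_strict_mono_ex1[OF Con_fin le])
    show "\<exists>X\<in>Con. Max ((?a + ?b) ` X) < Max (?a ` X) + Max (?b ` X)"
      by (rule bexI[where x="{p, j}"]) (rule lt, rule X)
  qed
  then show ?thesis unfolding rho_def Phi_def ww_add[of i k j] by (simp add: sum.distrib)
qed

lemma KR_eq: "KR n rho = convex hull Gen"
  unfolding KR_def Gen_def ..

lemma Gen_H0: "Gen \<subseteq> H0 n"
  unfolding Gen_def using unitv_H0 H0_scale by blast

lemma K_eq: "K = cyclohedron_polar n"
proof
  show "K \<subseteq> cyclohedron_polar n"
    unfolding K_def polar_char
  proof (rule hull_minimal)
    show "convex {y \<in> H0 n. Phi y \<le> 1}" by (rule convex_W)
    show "Lm ` Gen \<subseteq> {y \<in> H0 n. Phi y \<le> 1}"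
    proof
      fix x assume "x \<in> Lm ` Gen"
      then obtain i j where ij: "i < n" "j < n" "i \<noteq> j" "x = Lm ((1 / rho i j) *\<^sub>R (unitv i - unitv j))"
        unfolding Gen_def by blast
      have x: "x = (1 / Phi (ww i j)) *\<^sub>R ww i j" using ij(4) by (simp add: Lm_scale rho_def ww_def)
      have p: "Phi (ww i j) > 0" using ww_pos ij by simp
      have "Phi x = 1" using p unfolding x by (simp add: Phi_scale)
      moreover have "x \<in> H0 n" unfolding x by (intro H0_scale ww_H0)
      ultimately show "x \<in> {y \<in> H0 n. Phi y \<le> 1}" by simp
    qed
  qed
next
  show "cyclohedron_polar n \<subseteq> K"
  proof
    fix y assume "y \<in> cyclohedron_polar n"
    then have "y \<in> H0 n" "Phi y \<le> 1" unfolding polar_char by auto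
    then show "y \<in> K" using good_H0 good_K by blast
  qed
qed

lemma main_locale:
  "quasi_metric_on n rho \<and> affinely_isomorphic (KR n rho) (cyclohedron_polar n)
   \<and> (\<forall>i<n. \<forall>j<n. \<forall>k<n. i \<noteq> j \<and> j \<noteq> k \<and> i \<noteq> k \<longrightarrow> rho i k < rho i j + rho j k)"
proof (intro conjI)
  show "quasi_metric_on n rho"
    unfolding quasi_metric_on_def
  proof (intro conjI allI impI)
    fix x y assume x: "x < n" and y: "y < n"
    show "0 \<le> rho x y"
    proof (cases "x = y")
      case True then show ?thesis by (simp add: rho_def ww_self Phi_zero)
    next
      case False then show ?thesis using ww_pos[OF x y] by (simp add: rho_def)
    qed
    show "rho x y = 0 \<longleftrightarrow> x = y"
    proof (cases "x = y")
      case True then show ?thesis by (simp add: rho_def ww_self Phi_zero)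
    next
      case False then show ?thesis using ww_pos[OF x y] by (simp add: rho_def)
    qed
  next
    fix x y z assume "x < n" "y < n" "z < n"
    show "rho x z \<le> rho x y + rho y z"
      unfolding rho_def ww_add[of x z y] by (rule Phi_add)
  qed
next
  show "\<forall>i<n. \<forall>j<n. \<forall>k<n. i \<noteq> j \<and> j \<noteq> k \<and> i \<noteq> k \<longrightarrow> rho i k < rho i j + rho j k"
    using rho_strict by blast
next
  have KH: "KR n rho \<subseteq> H0 n"
    unfolding KR_eq using Gen_H0 affine_imp_convex[OF affine_H0] by (rule hull_minimal)
  have AH: "affine hull (KR n rho) \<subseteq> H0 n"
    using KH affine_H0 by (rule hull_minimal)
  have inj: "inj_on (\<lambda>x. Lm x + 0) (affine hull (KR n rho))"
    using AH Lm_inj by (auto intro!: inj_onI)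
  have img: "(\<lambda>x. Lm x + 0) ` KR n rho = cyclohedron_polar n"
    using convex_hull_linear_image[OF Lm_linear, of Gen] unfolding KR_eq K_eq[symmetric] K_def by simp
  show "affinely_isomorphic (KR n rho) (cyclohedron_polar n)"
    unfolding affinely_isomorphic_def using Lm_linear inj img by blast
qed

end

theorem mainTheorem12:
  fixes n :: nat
  assumes "n \<ge> 3"
  shows "\<exists>\<rho>. quasi_metric_on n \<rho>
            \<and> affinely_isomorphic (KR n \<rho>) (cyclohedron_polar n)
            \<and> (\<forall>i<n. \<forall>j<n. \<forall>k<n. i \<noteq> j \<and> j \<noteq> k \<and> i \<noteq> k \<longrightarrow> \<rho> i k < \<rho> i j + \<rho> j k)"
proof -
  interpret cyc n using assms by unfold_locales
  show ?thesis by (intro exI[of _ rho]) (rule main_locale)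
qed

end
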